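(* Let $m\le n$, $a>0$, $\lambda>0$, let $\mathscr{A}:\mathbb{R}^{m\times n}\to\mathbb{R}^p$ be linear with $\mathscr{A}(X)=A\,\mathrm{vec}(X)$ for $A\in\mathbb{R}^{p\times mn}$, $b\in\mathbb{R}^p$, and $0<\mu<\|A\|_2^{-2}$. If $X^*$ is a global minimizer of $\frac12\|\mathscr{A}(X)-b\|_2^2+\lambda T(X)$ over $X\in\mathbb{R}^{m\times n}$, then $$X^*=G_{\lambda\mu,a}(B_\mu(X^* )).$$ Equivalently, if $B_\mu(X^* )=U\,\mathrm{Diag}(\sigma^*_b)V^T$ is an SVD, then $X^*=U\,\mathrm{Diag}(g_{\lambda\mu,a}(\sigma^*_{b,1}),\dots,g_{\lambda\mu,a}(\sigma^*_{b,m}))V^T$.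
   Context: $\mathrm{vec}(X)$ stacks columns; $\|A\|_2$ is the spectral norm; $\mathscr{A}^*$ is the adjoint of $\mathscr{A}$ for the Frobenius inner product. $\rho_a(x)=\frac{(a+1)x}{a+x}$, $T(X)=\sum_{i=1}^{\mathrm{rank}(X)}\rho_a(\sigma_i(X))$ over singular values. $B_\mu(Z)=Z+\mu\mathscr{A}^*(b-\mathscr{A}(Z))$. For $\lambda'>0$: $h_{\lambda'}(x)=\mathrm{sgn}(x)\{\frac23(a+|x|)\cos(\varphi(x)/3)-\frac{2a}{3}+\frac{|x|}{3}\}$ with $\varphi(x)=\arccos(1-\frac{27\lambda' a(a+1)}{2(a+|x|)^3})$ and $\mathrm{sgn}(0)=0$; threshold $t=\lambda'\frac{a+1}{a}$ if $\lambda'\le\frac{a^2}{2(a+1)}$ and $t=\sqrt{2\lambda'(a+1)}-\frac a2$ otherwise; $g_{\lambda',a}(w)=0$ if $|w|\le t$, $h_{\lambda'}(w)$ if $|w|>t$; and for $Y$ with SVD $Y=U\mathrm{Diag}(\sigma)V^T$, $G_{\lambda',a}(Y)=U\,\mathrm{Diag}(g_{\lambda',a}(\sigma_1),\dots,g_{\lambda',a}(\sigma_m))V^T$. *)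

theory Defs
  imports "HOL-Analysis.Analysis"
begin

text \<open>Matrices in R^{m x n} are elements of real^'n^'m (row index 'm, column index 'n).
  The norm/inner product on this type are the Frobenius norm / inner product.\<close>

definition vecm :: "real^'n^'m \<Rightarrow> real^('m \<times> 'n)" where
  "vecm X = (\<chi> ij. X $ fst ij $ snd ij)"

definition Aop :: "real^('m \<times> 'n)^'p \<Rightarrow> real^'n^'m \<Rightarrow> real^'p" where
  "Aop A X = A *v vecm X"

definition spec_norm :: "real^'k^'p \<Rightarrow> real" where
  "spec_norm A = onorm (\<lambda>x. A *v x)"

definition Diag :: "('m \<Rightarrow> real) \<Rightarrow> real^'m^'m" where
  "Diag s = (\<chi> i j. if i = j then s i else 0)"

definition is_svd :: "real^'n^'m \<Rightarrow> real^'m^'m \<Rightarrow> ('m \<Rightarrow> real) \<Rightarrow> real^'m^'n \<Rightarrow> bool" where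
  "is_svd Y U s V \<longleftrightarrow> orthogonal_matrix U \<and> transpose V ** V = mat 1 \<and>
     (\<forall>i. 0 \<le> s i) \<and> Y = U ** Diag s ** transpose V"

definition sing_vals :: "real^'n^'m \<Rightarrow> ('m \<Rightarrow> real)" where
  "sing_vals X = (SOME s. \<exists>U V. is_svd X U s V)"

definition rho :: "real \<Rightarrow> real \<Rightarrow> real" where
  "rho a x = (a + 1) * x / (a + x)"

definition Tfun :: "real \<Rightarrow> real^'n^'m \<Rightarrow> real" where
  "Tfun a X = (\<Sum>i\<in>{i. sing_vals X i \<noteq> 0}. rho a (sing_vals X i))"

definition Bmu :: "real^('m \<times> 'n)^'p \<Rightarrow> real^'p \<Rightarrow> real \<Rightarrow> real^'n^'m \<Rightarrow> real^'n^'m" where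
  "Bmu A b mu Z = Z + mu *\<^sub>R adjoint (Aop A) (b - Aop A Z)"

definition phi_h :: "real \<Rightarrow> real \<Rightarrow> real \<Rightarrow> real" where
  "phi_h lam a x = arccos (1 - 27 * lam * a * (a + 1) / (2 * (a + \<bar>x\<bar>) ^ 3))"

definition h_fun :: "real \<Rightarrow> real \<Rightarrow> real \<Rightarrow> real" where
  "h_fun lam a x = sgn x * (2/3 * (a + \<bar>x\<bar>) * cos (phi_h lam a x / 3) - 2 * a / 3 + \<bar>x\<bar> / 3)"

definition thr :: "real \<Rightarrow> real \<Rightarrow> real" where
  "thr lam a = (if lam \<le> a\<^sup>2 / (2 * (a + 1)) then lam * (a + 1) / a
                else sqrt (2 * lam * (a + 1)) - a / 2)"

definition g_fun :: "real \<Rightarrow> real \<Rightarrow> real \<Rightarrow> real" where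
  "g_fun lam a w = (if \<bar>w\<bar> \<le> thr lam a then 0 else h_fun lam a w)"

definition G_op :: "real \<Rightarrow> real \<Rightarrow> real^'n^'m \<Rightarrow> real^'n^'m" where
  "G_op lam a Y = (let (U, s, V) = (SOME (U, s, V). is_svd Y U s V)
                   in U ** Diag (\<lambda>i. g_fun lam a (s i)) ** transpose V)"

end

theory Submission
  imports Defs
begin


lemma cubic_mono:
  fixes p y y0 c :: real
  assumes p: "p > 0" and y: "y \<ge> 2*p/3" and Py: "y^3 - p*y^2 + c = 0"
    and Py0: "y0^3 - p*y0^2 + c \<le> 0"
  shows "y0 \<le> y"
proof (rule ccontr)
  assume "\<not> y0 \<le> y"
  hence lt: "y < y0" by simp
  have "y0^3 - p*y0^2 + c - (y^3 - p*y^2 + c) = (y0 - y) * (y0^2 + y0*y + y^2 - p*(y0+y))"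
    by (simp add: algebra_simps power2_eq_square power3_eq_cube)
  moreover have "y0^2 + y0*y + y^2 - p*(y0+y) > 0"
  proof -
    have s: "y0 + y > 4*p/3" using lt y by simp
    have "y0^2 + y0*y + y^2 \<ge> 3/4 * (y0+y)^2"
      using sum_squares_ge_zero[of "y0-y" 0] by (simp add: power2_eq_square algebra_simps)
    moreover have "3/4*(y0+y)^2 - p*(y0+y) > 0"
    proof -
      have "3/4*(y0+y)^2 - p*(y0+y) = (y0+y)*(3/4*(y0+y) - p)" by (simp add: power2_eq_square algebra_simps)
      moreover have "(y0+y) > 0" "3/4*(y0+y) - p > 0" using s p by auto
      ultimately show ?thesis by simp
    qed
    ultimately show ?thesis by linarith
  qed
  ultimately have "y0^3 - p*y0^2 + c - (y^3 - p*y^2 + c) > 0" using lt by simp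
  thus False using Py Py0 by linarith
qed

lemma cubic_min:
  fixes p y0 c :: real
  assumes "p > 0" "y0 \<ge> 0" "y0^3 - p*y0^2 + c \<le> 0"
  shows "27 * c \<le> 4 * p^3"
proof -
  have "y0^3 - p*y0^2 + 4*p^3/27 = (y0 - 2*p/3)^2*(y0+p/3)"
    by (simp add: field_simps power2_eq_square power3_eq_cube)
  moreover have "(y0 - 2*p/3)^2*(y0+p/3) \<ge> 0" using assms by simp
  ultimately show ?thesis using assms by linarith
qed

lemma h_root:
  fixes l a w :: real
  assumes a: "a > 0" and l: "l > 0" and w: "w > 0"
    and rng: "27 * (l*a*(a+1)) \<le> 4 * (a+w)^3"
  defines "y \<equiv> a + h_fun l a w"
  shows "y^3 - (a+w)*y^2 + l*a*(a+1) = 0" and "y \<ge> 2*(a+w)/3"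
proof -
  define p where "p = a + w"
  define c where "c = l*a*(a+1)"
  have p: "p > 0" using a w by (simp add: p_def)
  define z where "z = 1 - 27 * l * a * (a + 1) / (2 * (a + w) ^ 3)"
  have z1: "z \<le> 1" using a l w by (simp add: z_def)
  have z2: "-1 \<le> z"
  proof -
    have "27 * l * a * (a + 1) / (2 * (a + w) ^ 3) \<le> 2"
      using rng p by (simp add: p_def divide_le_eq mult.assoc)
    thus ?thesis by (simp add: z_def)
  qed
  define al where "al = phi_h l a w / 3"
  have phi: "phi_h l a w = arccos z" using w by (simp add: phi_h_def z_def)
  have c3: "cos (3*al) = z" using z1 z2 by (simp add: al_def phi)
  have yv: "y = p/3 + 2*p/3 * cos al"
    using w by (simp add: y_def h_fun_def al_def p_def algebra_simps)
  have "y^3 - p*y^2 + c = 2*p^3/27 * (4 * cos al ^ 3 - 3 * cos al) - 2*p^3/27 + c"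
    by (simp add: yv algebra_simps power2_eq_square power3_eq_cube)
  also have "\<dots> = 2*p^3/27 * z - 2*p^3/27 + c" by (simp add: cos_treble_cos[symmetric] c3)
  also have "\<dots> = 0" using p by (simp add: z_def c_def p_def field_simps)
  finally show "y^3 - (a+w)*y^2 + l*a*(a+1) = 0" by (simp add: p_def c_def)
  have "arccos z \<ge> 0" "arccos z \<le> pi" using z1 z2 by (auto intro: arccos_lbound arccos_ubound)
  hence "al \<ge> 0" "al \<le> pi/3" by (auto simp: al_def phi)
  hence "cos al \<ge> cos (pi/3)"
    by (intro cos_monotone_0_pi_le) auto
  hence "cos al \<ge> 1/2" by (simp add: cos_60)
  hence "p * cos al \<ge> p * (1/2)" using p by (intro mult_left_mono) auto
  thus "y \<ge> 2*(a+w)/3" unfolding yv p_def by linarith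
qed

lemma zero_opt:
  fixes l a w x :: real
  assumes a: "a > 0" and l: "l > 0" and w: "w \<ge> 0" and x: "x \<ge> 0" and wt: "w \<le> thr l a"
  shows "w^2/2 \<le> (x-w)^2/2 + l * rho a x"
proof -
  have Q: "(x - 2*w)*(a+x) + 2*l*(a+1) \<ge> 0"
  proof (cases "l \<le> a\<^sup>2 / (2 * (a + 1))")
    case True
    hence t: "w \<le> l*(a+1)/a" using wt by (simp add: thr_def)
    hence "a*w \<le> l*(a+1)" using a by (simp add: field_simps)
    moreover have "l*(a+1)/a \<le> a/2" using True a by (simp add: field_simps power2_eq_square)
    ultimately have "a - 2*w \<ge> 0" "2*l*(a+1) - 2*a*w \<ge> 0" using t by linarith+
    moreover have "(x - 2*w)*(a+x) + 2*l*(a+1) = x^2 + (a-2*w)*x + (2*l*(a+1) - 2*a*w)"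
      by (simp add: algebra_simps power2_eq_square)
    moreover have "(a-2*w)*x \<ge> 0" using \<open>a - 2*w \<ge> 0\<close> x by simp
    moreover have "x^2 \<ge> 0" by simp
    ultimately show ?thesis by linarith
  next
    case False
    hence t: "w + a/2 \<le> sqrt (2*l*(a+1))" using wt by (simp add: thr_def)
    have "(w + a/2)^2 \<le> (sqrt (2*l*(a+1)))^2"
      using t w a by (intro power_mono) auto
    hence "(w + a/2)^2 \<le> 2*l*(a+1)" using l a by simp
    moreover have "(x - 2*w)*(a+x) + 2*l*(a+1) = (x + a/2 - w)^2 + (2*l*(a+1) - (w + a/2)^2)"
      by (simp add: algebra_simps power2_eq_square)
    moreover have "(x + a/2 - w)^2 \<ge> 0" by simp
    ultimately show ?thesis by linarith
  qed
  have "(x-w)^2/2 + l * rho a x - w^2/2 = x * ((x - 2*w)*(a+x) + 2*l*(a+1)) / (2*(a+x))"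
    using a x by (simp add: rho_def field_simps power2_eq_square)
  moreover have "x * ((x - 2*w)*(a+x) + 2*l*(a+1)) / (2*(a+x)) \<ge> 0"
    using Q x a by simp
  ultimately show ?thesis by linarith
qed

lemma gen_lin: "(A::real) + K * u - (B + K * z) = A - B + K * (u - z)"
  by (simp add: algebra_simps)

lemma scalar_g:
  fixes l a w x :: real
  assumes a: "a > 0" and l: "l > 0" and w: "w \<ge> 0" and x: "x \<ge> 0"
  shows "g_fun l a w \<ge> 0 \<and> (g_fun l a w - w)^2/2 + l * rho a (g_fun l a w) \<le> (x - w)^2/2 + l * rho a x"
proof (cases "w \<le> thr l a")
  case True
  thus ?thesis using zero_opt[OF a l w x True] w by (simp add: g_fun_def rho_def)
next
  case False
  hence wt: "w > thr l a" by simp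
  define p where "p = a + w"
  define c where "c = l*a*(a+1)"
  define P where "P = (\<lambda>y::real. y^3 - p*y^2 + c)"
  have tpos: "thr l a > 0"
  proof (cases "l \<le> a\<^sup>2 / (2 * (a + 1))")
    case True thus ?thesis using a l by (simp add: thr_def)
  next
    case False
    hence "a^2 < 2*l*(a+1)" using a by (simp add: field_simps)
    hence "sqrt (a^2) < sqrt (2*l*(a+1))" by (rule real_sqrt_less_mono)
    thus ?thesis using False a by (simp add: thr_def)
  qed
  have wpos: "w > 0" using tpos wt by simp
  have p: "p > 0" using a wpos by (simp add: p_def)
  have key: "P (w + a/2) \<le> 0 \<and> (w < a/2 \<longrightarrow> P a \<le> 0)"
  proof (cases "l \<le> a\<^sup>2 / (2 * (a + 1))")
    case True
    hence t: "w > l*(a+1)/a" using wt by (simp add: thr_def)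
    hence law: "l*(a+1) < a*w" using a by (simp add: field_simps)
    have "P a = a*(l*(a+1) - a*w)" by (simp add: P_def p_def c_def algebra_simps power2_eq_square power3_eq_cube)
    hence Pa: "P a \<le> 0" using law a by (simp add: mult_nonneg_nonpos)
    have "P (w + a/2) = a * (l*(a+1) - (w + a/2)^2/2)"
      by (simp add: P_def p_def c_def field_simps power2_eq_square power3_eq_cube)
    moreover have "(w + a/2)^2 \<ge> 2*a*w" using sum_squares_ge_zero[of "w - a/2" 0]
      by (simp add: algebra_simps power2_eq_square)
    ultimately have "P (w + a/2) \<le> 0" using law a by (simp add: mult_nonneg_nonpos)
    thus ?thesis using Pa by simp
  next
    case False
    hence t: "w + a/2 > sqrt (2*l*(a+1))" using wt by (simp add: thr_def)
    have "(sqrt (2*l*(a+1)))^2 < (w + a/2)^2"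
      using t l a by (intro power_strict_mono) auto
    hence lt: "2*l*(a+1) < (w + a/2)^2" using l a by simp
    have "P (w + a/2) = a * (l*(a+1) - (w + a/2)^2/2)"
      by (simp add: P_def p_def c_def field_simps power2_eq_square power3_eq_cube)
    hence "P (w + a/2) \<le> 0" using lt a by (simp add: mult_nonneg_nonpos)
    moreover have "a/2 < w"
    proof -
      have "a^2 < 2*l*(a+1)" using False a by (simp add: field_simps)
      hence "sqrt (a^2) < sqrt (2*l*(a+1))" by (rule real_sqrt_less_mono)
      thus ?thesis using t a by simp
    qed
    ultimately show ?thesis by simp
  qed
  have rng: "27 * c \<le> 4 * p^3"
    using cubic_min[OF p, of "w + a/2" c] key a w by (simp add: P_def)
  define y where "y = a + h_fun l a w"
  have root: "y^3 - (a+w)*y^2 + l*a*(a+1) = 0" and y23: "y \<ge> 2*(a+w)/3"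
    using h_root[OF a l wpos] rng by (auto simp: y_def c_def p_def)
  have Py: "P y = 0" using root by (simp add: P_def p_def c_def)
  have y1: "w + a/2 \<le> y"
    using cubic_mono[OF p, of y c "w + a/2"] y23 Py key by (simp add: P_def p_def)
  have y2: "a \<le> y"
  proof (cases "w < a/2")
    case True thus ?thesis using cubic_mono[OF p, of y c a] y23 Py key by (simp add: P_def p_def)
  next
    case False thus ?thesis using y1 by simp
  qed
  define h where "h = h_fun l a w"
  have g: "g_fun l a w = h" using wt w by (simp add: g_fun_def h_def)
  have h0: "h \<ge> 0" using y2 by (simp add: y_def h_def)
  have hw: "a + 2*h - 2*w \<ge> 0" using y1 by (simp add: y_def h_def)
  have stat: "l*a*(a+1) = (w - h)*(a+h)^2"
    using root by (simp add: y_def h_def algebra_simps power2_eq_square power3_eq_cube)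
  have "(x - w)^2/2 + l * rho a x - ((h - w)^2/2 + l * rho a h)
        = (x-h)^2*(a + 2*h - 2*w + x) / (2*(a+x))"
  proof -
    have "l*(a+1) = (w - h)*(a+h)^2 / a" using stat a by (simp add: field_simps)
    hence "(x - w)^2/2 + l * rho a x - ((h - w)^2/2 + l * rho a h)
        = (x - w)^2/2 + ((w - h)*(a+h)^2 / a) * (x/(a+x)) - ((h - w)^2/2 + ((w - h)*(a+h)^2 / a) * (h/(a+h)))"
      unfolding rho_def by (metis (no_types, lifting) mult.assoc times_divide_eq_right)
    also have "\<dots> = (x - w)^2/2 - (h - w)^2/2 + ((w - h)*(a+h)^2 / a) * (x/(a+x) - h/(a+h))"
      using gen_lin by blast
    also have "x/(a+x) - h/(a+h) = a*(x-h)/((a+x)*(a+h))"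
    proof -
      have "a + x \<noteq> 0" "a + h \<noteq> 0" using a x h0 by auto
      thus ?thesis by (simp add: field_simps)
    qed
    also have "((w - h)*(a+h)^2 / a) * (a*(x-h)/((a+x)*(a+h))) = (w-h)*(a+h)*(x-h)/(a+x)"
    proof -
      have nz: "a + x \<noteq> 0" "a + h \<noteq> 0" "a \<noteq> 0" using a x h0 by auto
      have "((w - h)*(a+h)^2 / a) * (a*(x-h)/((a+x)*(a+h))) = ((w-h)*(a+h)*(x-h)) * ((a+h)*a) / ((a+x)*((a+h)*a))"
        by (simp add: power2_eq_square field_simps)
      also have "\<dots> = (w-h)*(a+h)*(x-h)/(a+x)" using nz by simp
      finally show ?thesis .
    qed
    also have "(x - w)^2/2 - (h - w)^2/2 + (w-h)*(a+h)*(x-h)/(a+x) = (x-h)^2*(a + 2*h - 2*w + x) / (2*(a+x))"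
    proof -
      have ax: "a + x \<noteq> 0" using a x by auto
      have "(x - w)^2/2 - (h - w)^2/2 = ((x - w)^2 - (h - w)^2)*(a+x)/(2*(a+x))" using ax by (simp add: field_simps)
      hence "(x - w)^2/2 - (h - w)^2/2 + (w-h)*(a+h)*(x-h)/(a+x)
         = (((x - w)^2 - (h - w)^2)*(a+x) + 2*((w-h)*(a+h)*(x-h)))/(2*(a+x))"
        using ax by (simp add: field_simps)
      also have "((x - w)^2 - (h - w)^2)*(a+x) + 2*((w-h)*(a+h)*(x-h)) = (x-h)^2*(a + 2*h - 2*w + x)"
        by (simp add: algebra_simps power2_eq_square)
      finally show ?thesis .
    qed
    finally show ?thesis .
  qed
  moreover have "(x-h)^2*(a + 2*h - 2*w + x) / (2*(a+x)) \<ge> 0" using hw x a by simp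
  ultimately show ?thesis using g h0 by simp
qed



lemma sym_inner:
  fixes M :: "real^'m^'m"
  assumes "transpose M = M"
  shows "x \<bullet> (M *v y) = (M *v x) \<bullet> y"
proof -
  have "x \<bullet> (M *v y) = (x v* M) \<bullet> y" by (simp add: dot_lmul_matrix)
  also have "x v* M = transpose M *v x" by simp
  finally show ?thesis using assms by simp
qed

lemma quad_zero:
  fixes b c :: real
  assumes c: "c \<ge> 0" and H: "\<And>t. 2*t*b \<le> t^2*c"
  shows "b = 0"
proof -
  define t where "t = b/(c+1)"
  have ts: "t*(c+1) = b" using c by (simp add: t_def)
  have "2*t*b \<le> t^2*c" by (rule H)
  hence "(c+1)^2*(2*t*b) \<le> (c+1)^2*(t^2*c)" by (intro mult_left_mono) auto
  moreover have "(c+1)^2*(2*t*b) = 2*b*(t*(c+1))*(c+1)" by (simp add: power2_eq_square algebra_simps)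
  moreover have "(c+1)^2*(t^2*c) = (t*(c+1))^2*c" by (simp add: power2_eq_square algebra_simps)
  ultimately have "2*b*(t*(c+1))*(c+1) \<le> (t*(c+1))^2*c" by linarith
  hence "2*b*b*(c+1) \<le> b*b*c" unfolding ts by (simp add: power2_eq_square)
  hence "b*b*(c+2) \<le> 0" by (simp add: algebra_simps)
  hence "b*b \<le> 0" using c by (auto simp: mult_le_0_iff)
  thus ?thesis by (metis mult_eq_0_iff order_antisym zero_le_square)
qed

lemma eigvec_exists:
  fixes M :: "real^'m^'m"
  assumes sym: "transpose M = M" and S: "subspace S" and inv: "\<forall>x\<in>S. M *v x \<in> S"
    and ne: "\<not> S \<subseteq> {0}"
  shows "\<exists>e\<in>S. norm e = 1 \<and> (\<exists>d. M *v e = d *\<^sub>R e)"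
proof -
  define K where "K = S \<inter> sphere 0 1"
  have cK: "compact K" unfolding K_def
    by (intro closed_Int_compact closed_subspace S compact_sphere)
  obtain x where x: "x \<in> S" "x \<noteq> 0" using ne by auto
  have "x /\<^sub>R norm x \<in> K" using x S by (auto simp: K_def subspace_scale)
  hence Kne: "K \<noteq> {}" by auto
  have cont: "continuous_on K (\<lambda>x. x \<bullet> (M *v x))"
    by (intro continuous_intros matrix_vector_mult_linear_continuous_on)
  obtain x0 where x0: "x0 \<in> K" and mx: "\<forall>y\<in>K. y \<bullet> (M *v y) \<le> x0 \<bullet> (M *v x0)"
    using continuous_attains_sup[OF cK Kne cont] by blast
  define lam where "lam = x0 \<bullet> (M *v x0)"
  have x0S: "x0 \<in> S" and nx0: "norm x0 = 1" using x0 by (auto simp: K_def)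
  have bound: "y \<bullet> (M *v y) \<le> lam * (y \<bullet> y)" if y: "y \<in> S" for y
  proof (cases "y = 0")
    case True thus ?thesis by simp
  next
    case False
    define u where "u = y /\<^sub>R norm y"
    have "u \<in> K" using y False S by (auto simp: K_def u_def subspace_scale)
    hence "u \<bullet> (M *v u) \<le> lam" using mx by (simp add: lam_def)
    have yu: "y = norm y *\<^sub>R u" using False by (simp add: u_def)
    have "y \<bullet> (M *v y) = (norm y)^2 * (u \<bullet> (M *v u))"
      by (subst (1 2) yu) (simp add: matrix_vector_mult_scaleR power2_eq_square)
    also have "\<dots> \<le> (norm y)^2 * lam" by (rule mult_left_mono) (use \<open>u \<bullet> (M *v u) \<le> lam\<close> in auto)
    also have "(norm y)^2 = y \<bullet> y" by (simp add: power2_norm_eq_inner)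
    finally show ?thesis by (simp add: mult.commute)
  qed
  have b0: "x0 \<bullet> (M *v y) - lam * (x0 \<bullet> y) = 0" if y: "y \<in> S" for y
  proof (rule quad_zero)
    show "lam * (y \<bullet> y) - y \<bullet> (M *v y) \<ge> 0" using bound[OF y] by simp
    fix t :: real
    have "x0 + t *\<^sub>R y \<in> S" using x0S y S by (simp add: subspace_add subspace_scale)
    hence "(x0 + t *\<^sub>R y) \<bullet> (M *v (x0 + t *\<^sub>R y)) \<le> lam * ((x0 + t *\<^sub>R y) \<bullet> (x0 + t *\<^sub>R y))"
      by (rule bound)
    moreover note e1 = this
    have e2: "(x0 + t *\<^sub>R y) \<bullet> (M *v (x0 + t *\<^sub>R y)) = lam + 2*t*(x0 \<bullet> (M *v y)) + t^2 * (y \<bullet> (M *v y))"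
    proof -
      have "y \<bullet> (M *v x0) = x0 \<bullet> (M *v y)"
        using sym_inner[OF sym, of y x0] by (simp add: inner_commute)
      thus ?thesis
        by (simp add: lam_def matrix_vector_right_distrib matrix_vector_mult_scaleR inner_add_left inner_add_right
            power2_eq_square algebra_simps)
    qed
    have e3: "(x0 + t *\<^sub>R y) \<bullet> (x0 + t *\<^sub>R y) = 1 + 2*t*(x0 \<bullet> y) + t^2 * (y \<bullet> y)"
    proof -
      have "x0 \<bullet> x0 = 1" using nx0 by (simp add: norm_eq_1)
      thus ?thesis by (simp add: inner_add_left inner_add_right power2_eq_square algebra_simps inner_commute)
    qed
    have "lam + 2*t*(x0 \<bullet> (M *v y)) + t^2 * (y \<bullet> (M *v y)) \<le> lam * (1 + 2*t*(x0 \<bullet> y) + t^2 * (y \<bullet> y))"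
      using e1 unfolding e2 e3 .
    thus "2*t*(x0 \<bullet> (M *v y) - lam * (x0 \<bullet> y)) \<le> t^2 * (lam * (y \<bullet> y) - y \<bullet> (M *v y))"
      by (simp add: algebra_simps)
  qed
  define z where "z = M *v x0 - lam *\<^sub>R x0"
  have zS: "z \<in> S" using inv x0S S by (simp add: z_def subspace_diff subspace_scale)
  have "x0 \<bullet> (M *v z) - lam * (x0 \<bullet> z) = z \<bullet> z"
    using sym_inner[OF sym, of x0 z] by (simp add: z_def inner_diff_left inner_commute)
  hence "z \<bullet> z = 0" using b0[OF zS] by simp
  hence "z = 0" by simp
  hence "M *v x0 = lam *\<^sub>R x0" by (simp add: z_def)
  thus ?thesis using x0S nx0 by blast
qed

lemma spectral_sub:
  fixes M :: "real^'m^'m"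
  assumes sym: "transpose M = M"
  shows "subspace S \<Longrightarrow> (\<forall>x\<in>S. M *v x \<in> S) \<Longrightarrow>
    \<exists>B. B \<subseteq> S \<and> pairwise orthogonal B \<and> (\<forall>x\<in>B. norm x = 1) \<and> card B = dim S \<and> finite B \<and>
        (\<forall>x\<in>B. \<exists>d. M *v x = d *\<^sub>R x)"
proof (induct "dim S" arbitrary: S rule: less_induct)
  case less
  show ?case
  proof (cases "S \<subseteq> {0}")
    case True
    hence "dim S = 0" by (simp add: dim_eq_0)
    thus ?thesis by (intro exI[of _ "{}"]) auto
  next
    case False
    obtain e where eS: "e \<in> S" and ne: "norm e = 1" and ed: "\<exists>d. M *v e = d *\<^sub>R e"
      using eigvec_exists[OF sym less.prems(1) less.prems(2) False] by blast
    obtain d where d: "M *v e = d *\<^sub>R e" using ed by blast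
    define S' where "S' = {y \<in> S. \<forall>x \<in> span {e}. orthogonal x y}"
    have "S' = S \<inter> {y. \<forall>x \<in> span {e}. orthogonal x y}" unfolding S'_def by blast
    hence subS': "subspace S'"
      using subspace_inter[OF less.prems(1) subspace_orthogonal_to_vectors[of "span {e}"]] by simp
    have spe: "span {e} \<subseteq> S" using span_minimal[of "{e}" S] eS less.prems(1) by blast
    have dimeq: "dim S' + dim (span {e}) = dim S"
      unfolding S'_def by (rule dim_subspace_orthogonal_to_vectors[OF subspace_span less.prems(1) spe])
    have e0: "e \<noteq> 0" using ne by auto
    have "dim (span {e}) = 1" using e0 by (simp add: dim_span)
    hence dlt: "dim S' < dim S" using dimeq by simp
    have orth_e: "y \<in> S' \<longleftrightarrow> y \<in> S \<and> e \<bullet> y = 0" for y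
    proof
      assume "y \<in> S'" thus "y \<in> S \<and> e \<bullet> y = 0" by (auto simp: S'_def orthogonal_def span_base)
    next
      assume h: "y \<in> S \<and> e \<bullet> y = 0"
      { fix x assume "x \<in> span {e}"
        then obtain c where "x = c *\<^sub>R e" by (auto simp: span_singleton)
        hence "orthogonal x y" using h by (simp add: orthogonal_def) }
      thus "y \<in> S'" using h by (auto simp: S'_def)
    qed
    have invS': "\<forall>x\<in>S'. M *v x \<in> S'"
    proof
      fix y assume y: "y \<in> S'"
      hence "y \<in> S" "e \<bullet> y = 0" using orth_e by auto
      moreover have "e \<bullet> (M *v y) = (M *v e) \<bullet> y" by (rule sym_inner[OF sym])
      ultimately show "M *v y \<in> S'" using less.prems(2) by (simp add: orth_e d)
    qed
    obtain B' where B': "B' \<subseteq> S'" "pairwise orthogonal B'" "\<forall>x\<in>B'. norm x = 1" "card B' = dim S'" "finite B'"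
       "\<forall>x\<in>B'. \<exists>d. M *v x = d *\<^sub>R x"
      using less.hyps[OF dlt subS' invS'] by blast
    have eB': "e \<notin> B'"
    proof
      assume "e \<in> B'"
      hence "e \<bullet> e = 0" using B'(1) orth_e by auto
      thus False using e0 by simp
    qed
    have "\<forall>y\<in>B'. orthogonal e y"
    proof
      fix y assume "y \<in> B'"
      hence "y \<in> S'" using B'(1) by blast
      thus "orthogonal e y" using orth_e by (simp add: orthogonal_def)
    qed
    hence po: "pairwise orthogonal (insert e B')"
      using pairwise_orthogonal_insert[OF B'(2)] by blast
    have cd: "card (insert e B') = dim S" using eB' B'(4,5) dimeq \<open>dim (span {e}) = 1\<close> by simp
    have sub: "insert e B' \<subseteq> S" using B'(1) eS orth_e by blast
    have n1: "\<forall>x\<in>insert e B'. norm x = 1" using B'(3) ne by blast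
    have ev: "\<forall>x\<in>insert e B'. \<exists>d. M *v x = d *\<^sub>R x" using B'(6) ed by blast
    show ?thesis
      apply (rule exI[of _ "insert e B'"])
      using sub po n1 cd B'(5) ev by blast
  qed
qed



lemma tY_inner:
  fixes Y :: "real^'n^'m"
  shows "(transpose Y *v x) \<bullet> (transpose Y *v z) = x \<bullet> ((Y ** transpose Y) *v z)"
proof -
  have "(transpose Y *v x) \<bullet> (transpose Y *v z) = (x v* Y) \<bullet> (transpose Y *v z)" by simp
  also have "\<dots> = x \<bullet> (Y *v (transpose Y *v z))" by (rule dot_lmul_matrix)
  also have "\<dots> = x \<bullet> ((Y ** transpose Y) *v z)" by (simp only: matrix_vector_mul_assoc)
  finally show ?thesis .
qed

lemma colmat_orth:
  fixes u :: "'m::finite \<Rightarrow> real^'n"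
  assumes "\<And>i j. u i \<bullet> u j = (if i = j then 1 else 0)"
  shows "transpose ((\<chi> r i. u i $ r) :: real^'m^'n) ** (\<chi> r i. u i $ r) = mat 1"
  using assms by (simp add: matrix_matrix_mult_def transpose_def mat_def inner_vec_def vec_eq_iff mult.commute)

lemma Diag_transpose [simp]: "transpose (Diag s) = Diag s"
  by (simp add: Diag_def transpose_def vec_eq_iff)

lemma svd_exists:
  fixes Y :: "real^'n^'m"
  assumes mn: "CARD('m) \<le> CARD('n)"
  shows "\<exists>U s V. is_svd Y U s V"
proof -
  define M where "M = Y ** transpose Y"
  have symM: "transpose M = M" by (simp add: M_def matrix_transpose_mul)
  obtain B where B: "pairwise orthogonal B" "\<forall>x\<in>B. norm x = 1" "card B = CARD('m)" "finite B"
     "\<forall>x\<in>B. \<exists>d. M *v x = d *\<^sub>R x"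
    using spectral_sub[OF symM, of UNIV] by (auto simp: dim_UNIV)
  obtain u where u: "bij_betw u (UNIV::'m set) B"
    using finite_same_card_bij[of "UNIV::'m set" B] B(3,4) by auto
  have uB: "u i \<in> B" for i using u by (auto simp: bij_betw_def)
  have uorth: "u i \<bullet> u j = (if i = j then 1 else 0)" for i j
  proof (cases "i = j")
    case True thus ?thesis using B(2) uB[of i] by (simp add: norm_eq_1)
  next
    case False
    hence "u i \<noteq> u j" using u by (auto simp: bij_betw_def inj_on_def)
    thus ?thesis using B(1) uB[of i] uB[of j] False by (auto simp: pairwise_def orthogonal_def)
  qed
  have ueig: "\<exists>d. M *v u i = d *\<^sub>R u i" for i using B(5) uB by blast
  define Yt where "Yt i = transpose Y *v u i" for i
  have Ytin: "Yt i \<bullet> Yt j = 0" if "i \<noteq> j" for i j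
  proof -
    obtain d where "M *v u j = d *\<^sub>R u j" using ueig by blast
    thus ?thesis using that uorth[of i j] unfolding Yt_def tY_inner M_def[symmetric] by simp
  qed
  define s where "s i = norm (Yt i)" for i
  define Ip where "Ip = {i. s i \<noteq> 0}"
  define I0 where "I0 = {i. s i = 0}"
  define vp where "vp i = Yt i /\<^sub>R s i" for i
  have vpn: "vp i \<bullet> vp j = (if i = j then 1 else 0)" if "i \<in> Ip" "j \<in> Ip" for i j
  proof (cases "i = j")
    case True
    thus ?thesis using that by (simp add: vp_def Ip_def s_def dot_square_norm power2_eq_square)
  next
    case False thus ?thesis using Ytin[OF False] by (simp add: vp_def)
  qed
  define VP where "VP = vp ` Ip"
  define C where "C = {y \<in> UNIV. \<forall>x\<in>span VP. orthogonal x y}"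
  have dC: "dim C + dim (span VP) = dim (UNIV :: (real^'n) set)"
    unfolding C_def by (rule dim_subspace_orthogonal_to_vectors) (simp_all add: subspace_span subspace_UNIV)
  have "dim (span VP) \<le> card Ip"
  proof -
    have "dim (span VP) = dim VP" by (simp add: dim_span)
    also have "\<dots> \<le> card VP" by (rule dim_le_card') (simp add: VP_def)
    also have "\<dots> \<le> card Ip" unfolding VP_def by (rule card_image_le) simp
    finally show ?thesis .
  qed
  hence dCge: "dim C \<ge> card I0"
  proof -
    have "Ip \<union> I0 = UNIV" "Ip \<inter> I0 = {}" by (auto simp: Ip_def I0_def)
    hence "card Ip + card I0 = CARD('m)"
      using card_Un_disjoint[of Ip I0] by simp
    moreover have "dim (UNIV :: (real^'n) set) = CARD('n)" by (simp add: dim_UNIV)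
    ultimately show ?thesis using dC mn \<open>dim (span VP) \<le> card Ip\<close> by linarith
  qed
  have subC: "subspace C" unfolding C_def using subspace_orthogonal_to_vectors by simp
  obtain Bc where Bc: "Bc \<subseteq> C" "pairwise orthogonal Bc" "\<And>x. x \<in> Bc \<Longrightarrow> norm x = 1"
       "independent Bc" "card Bc = dim C"
    using orthonormal_basis_subspace[OF subC] by metis
  have fBc: "finite Bc" using Bc(4) by (rule finiteI_independent)
  obtain w where w: "w ` I0 \<subseteq> Bc" "inj_on w I0"
    using card_le_inj[of I0 Bc] fBc dCge Bc(5) by auto
  define v where "v i = (if s i \<noteq> 0 then vp i else w i)" for i
  have vorth: "v i \<bullet> v j = (if i = j then 1 else 0)" for i j
  proof -
    have wC: "w k \<in> C" if "s k = 0" for k using w Bc(1) that by (auto simp: I0_def)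
    have orthC: "vp k \<bullet> w l = 0" if "s k \<noteq> 0" "s l = 0" for k l
    proof -
      have "vp k \<in> span VP" using that by (auto simp: VP_def Ip_def intro: span_base)
      thus ?thesis using wC[OF that(2)] by (auto simp: C_def orthogonal_def)
    qed
    show ?thesis
    proof (cases "s i \<noteq> 0"; cases "s j \<noteq> 0")
      assume "s i \<noteq> 0" "s j \<noteq> 0" thus ?thesis using vpn by (simp add: v_def Ip_def)
    next
      assume "s i \<noteq> 0" "\<not> s j \<noteq> 0" thus ?thesis using orthC[of i j] by (auto simp: v_def)
    next
      assume "\<not> s i \<noteq> 0" "s j \<noteq> 0" thus ?thesis using orthC[of j i] by (auto simp: v_def inner_commute)
    next
      assume a: "\<not> s i \<noteq> 0" "\<not> s j \<noteq> 0"
      show ?thesis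
      proof (cases "i = j")
        case True thus ?thesis using a Bc(3) w(1) by (auto simp: v_def I0_def norm_eq_1)
      next
        case False
        hence "w i \<noteq> w j" using w(2) a by (auto simp: inj_on_def I0_def)
        moreover have "w i \<in> Bc" "w j \<in> Bc" using w(1) a by (auto simp: I0_def)
        ultimately show ?thesis using Bc(2) a False by (auto simp: v_def pairwise_def orthogonal_def)
      qed
    qed
  qed
  have sv: "s i *\<^sub>R v i = Yt i" for i
    by (cases "s i = 0") (auto simp: v_def vp_def s_def)
  define U :: "real^'m^'m" where "U = (\<chi> r i. u i $ r)"
  define V :: "real^'m^'n" where "V = (\<chi> r i. v i $ r)"
  have UU: "transpose U ** U = mat 1" unfolding U_def by (rule colmat_orth[OF uorth])
  have VV: "transpose V ** V = mat 1" unfolding V_def by (rule colmat_orth[OF vorth])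
  have oU: "orthogonal_matrix U" using UU by (simp add: orthogonal_matrix)
  have UUt: "U ** transpose U = mat 1" using UU matrix_left_right_inverse by blast
  have VD: "V ** Diag s = transpose Y ** U"
  proof -
    have "(V ** Diag s) $ c $ i = (transpose Y ** U) $ c $ i" for c i
    proof -
      have "(V ** Diag s) $ c $ i = s i * v i $ c"
        by (simp add: matrix_matrix_mult_def Diag_def V_def if_distrib sum.delta' cong: if_cong)
      also have "\<dots> = Yt i $ c" using arg_cong[OF sv[of i], of "\<lambda>x. x $ c"] by simp
      also have "\<dots> = (transpose Y ** U) $ c $ i"
        unfolding Yt_def U_def matrix_matrix_mult_def matrix_vector_mult_def transpose_def by simp
      finally show ?thesis .
    qed
    thus ?thesis by (simp add: vec_eq_iff)
  qed
  have "U ** Diag s ** transpose V = U ** transpose (V ** Diag s)"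
    by (simp add: matrix_transpose_mul matrix_mul_assoc)
  also have "\<dots> = U ** (transpose U ** Y)" by (simp add: VD matrix_transpose_mul)
  also have "\<dots> = Y" by (simp add: matrix_mul_assoc UUt)
  finally have "Y = U ** Diag s ** transpose V" ..
  moreover have "\<forall>i. 0 \<le> s i" by (simp add: s_def)
  ultimately show ?thesis using oU VV unfolding is_svd_def by blast
qed



lemma entry_svd:
  fixes P :: "real^'k^'r" and Q :: "real^'k^'c"
  shows "(P ** Diag s ** transpose Q) $ a $ b = (\<Sum>i\<in>UNIV. P$a$i * s i * Q$b$i)"
  by (simp add: matrix_matrix_mult_def Diag_def transpose_def if_distrib sum.delta' cong: if_cong)

lemma inner_mat: "(X::real^'c^'r) \<bullet> Y = (\<Sum>a\<in>UNIV. \<Sum>b\<in>UNIV. X$a$b * Y$a$b)"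
  by (simp add: inner_vec_def)

lemma swap4:
  fixes f :: "'a::finite \<Rightarrow> 'b::finite \<Rightarrow> 'c::finite \<Rightarrow> 'd::finite \<Rightarrow> real"
  shows "(\<Sum>a\<in>UNIV. \<Sum>b\<in>UNIV. \<Sum>i\<in>UNIV. \<Sum>j\<in>UNIV. f a b i j) = (\<Sum>i\<in>UNIV. \<Sum>j\<in>UNIV. \<Sum>a\<in>UNIV. \<Sum>b\<in>UNIV. f a b i j)"
proof -
  have "(\<Sum>a\<in>UNIV. \<Sum>b\<in>UNIV. \<Sum>i\<in>UNIV. \<Sum>j\<in>UNIV. f a b i j) = (\<Sum>a\<in>UNIV. \<Sum>i\<in>UNIV. \<Sum>b\<in>UNIV. \<Sum>j\<in>UNIV. f a b i j)"
    by (rule sum.cong[OF refl], rule sum.swap)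
  also have "\<dots> = (\<Sum>a\<in>UNIV. \<Sum>i\<in>UNIV. \<Sum>j\<in>UNIV. \<Sum>b\<in>UNIV. f a b i j)"
    by (rule sum.cong[OF refl], rule sum.cong[OF refl], rule sum.swap)
  also have "\<dots> = (\<Sum>i\<in>UNIV. \<Sum>a\<in>UNIV. \<Sum>j\<in>UNIV. \<Sum>b\<in>UNIV. f a b i j)"
    by (rule sum.swap)
  also have "\<dots> = (\<Sum>i\<in>UNIV. \<Sum>j\<in>UNIV. \<Sum>a\<in>UNIV. \<Sum>b\<in>UNIV. f a b i j)"
    by (rule sum.cong[OF refl], rule sum.swap)
  finally show ?thesis .
qed

lemma inner_svd:
  fixes P :: "real^'k^'r" and Q :: "real^'k^'c" and U :: "real^'l^'r" and V :: "real^'l^'c"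
  shows "(P ** Diag sg ** transpose Q) \<bullet> (U ** Diag s ** transpose V)
    = (\<Sum>i\<in>UNIV. \<Sum>j\<in>UNIV. sg i * s j * (\<Sum>a\<in>UNIV. P$a$i * U$a$j) * (\<Sum>b\<in>UNIV. Q$b$i * V$b$j))"
proof -
  have "(P ** Diag sg ** transpose Q) \<bullet> (U ** Diag s ** transpose V)
     = (\<Sum>a\<in>UNIV. \<Sum>b\<in>UNIV. \<Sum>i\<in>UNIV. \<Sum>j\<in>UNIV. (P$a$i * sg i * Q$b$i) * (U$a$j * s j * V$b$j))"
    unfolding inner_mat entry_svd by (simp add: sum_product)
  also have "\<dots> = (\<Sum>i\<in>UNIV. \<Sum>j\<in>UNIV. \<Sum>a\<in>UNIV. \<Sum>b\<in>UNIV. (P$a$i * sg i * Q$b$i) * (U$a$j * s j * V$b$j))"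
    by (rule swap4)
  also have "\<dots> = (\<Sum>i\<in>UNIV. \<Sum>j\<in>UNIV. sg i * s j * (\<Sum>a\<in>UNIV. P$a$i * U$a$j) * (\<Sum>b\<in>UNIV. Q$b$i * V$b$j))"
    by (simp add: sum_product sum_distrib_left mult_ac)
  finally show ?thesis .
qed

lemma bessel:
  fixes V :: "real^'k^'c"
  assumes VV: "transpose V ** V = mat 1"
  shows "norm (transpose V *v x) \<le> norm x"
proof -
  define y where "y = transpose V *v x"
  have "(V *v y) \<bullet> (V *v y) = (transpose V *v (V *v y)) \<bullet> y"
  proof -
    have "(V *v y) \<bullet> (V *v y) = ((V *v y) v* V) \<bullet> y" by (simp add: dot_lmul_matrix)
    thus ?thesis by simp
  qed
  also have "\<dots> = y \<bullet> y" by (simp only: matrix_vector_mul_assoc VV matrix_vector_mul_lid)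
  finally have nV: "norm (V *v y) = norm y" by (simp add: norm_eq_sqrt_inner)
  have "y \<bullet> y = (x v* V) \<bullet> y" by (simp add: y_def)
  also have "\<dots> = x \<bullet> (V *v y)" by (rule dot_lmul_matrix)
  also have "\<dots> \<le> norm x * norm (V *v y)" by (rule norm_cauchy_schwarz)
  finally have "norm y ^ 2 \<le> norm x * norm y" using nV by (simp add: power2_norm_eq_inner)
  hence "norm y \<le> norm x"
    by (cases "norm y = 0") (auto simp: power2_eq_square)
  thus ?thesis by (simp add: y_def)
qed

lemma rowsum_le:
  fixes Q :: "real^'k^'c" and V :: "real^'l^'c"
  assumes QQ: "transpose Q ** Q = mat 1" and VV: "transpose V ** V = mat 1"
  shows "(\<Sum>j\<in>UNIV. (\<Sum>b\<in>UNIV. Q$b$i * V$b$j)^2) \<le> 1"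
proof -
  define q where "q = (\<chi> b. Q$b$i)"
  have "(\<Sum>j\<in>UNIV. (\<Sum>b\<in>UNIV. Q$b$i * V$b$j)^2) = (transpose V *v q) \<bullet> (transpose V *v q)"
    unfolding inner_vec_def matrix_vector_mult_def transpose_def q_def by (simp add: power2_eq_square mult.commute)
  also have "\<dots> = (norm (transpose V *v q))^2" by (rule power2_norm_eq_inner[symmetric])
  also have "\<dots> \<le> (norm q)^2" using bessel[OF VV, of q] by (simp add: power_mono)
  also have "(norm q)^2 = 1"
  proof -
    have "(norm q)^2 = (transpose Q ** Q) $ i $ i"
      by (simp add: power2_norm_eq_inner inner_vec_def matrix_matrix_mult_def transpose_def q_def)
    thus ?thesis using QQ by (simp add: mat_def)
  qed
  finally show ?thesis .
qed

lemma vn_bound: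
  fixes P :: "real^'k^'r" and Q :: "real^'k^'c" and U :: "real^'l^'r" and V :: "real^'l^'c"
  assumes PP: "transpose P ** P = mat 1" and QQ: "transpose Q ** Q = mat 1"
    and UU: "transpose U ** U = mat 1" and VV: "transpose V ** V = mat 1"
    and sg: "\<forall>i. sg i \<ge> 0" and s: "\<forall>j. s j \<ge> 0"
    and F: "\<forall>i. F i \<ge> 0" and G: "\<forall>j. G j \<ge> 0" and FG: "\<And>i j. sg i * s j \<le> F i + G j"
  shows "(P ** Diag sg ** transpose Q) \<bullet> (U ** Diag s ** transpose V) \<le> (\<Sum>i\<in>UNIV. F i) + (\<Sum>j\<in>UNIV. G j)"
proof -
  define W where "W i j = (\<Sum>a\<in>UNIV. P$a$i * U$a$j)" for i j
  define Z where "Z i j = (\<Sum>b\<in>UNIV. Q$b$i * V$b$j)" for i j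
  define D where "D i j = ((W i j)^2 + (Z i j)^2)/2" for i j
  have D0: "D i j \<ge> 0" for i j by (simp add: D_def)
  have row: "(\<Sum>j\<in>UNIV. D i j) \<le> 1" for i
  proof -
    have "(\<Sum>j\<in>UNIV. D i j) = (\<Sum>j\<in>UNIV. (W i j)^2)/2 + (\<Sum>j\<in>UNIV. (Z i j)^2)/2"
      by (simp add: D_def add_divide_distrib sum.distrib sum_divide_distrib)
    moreover have "(\<Sum>j\<in>UNIV. (W i j)^2) \<le> 1" unfolding W_def by (rule rowsum_le[OF PP UU])
    moreover have "(\<Sum>j\<in>UNIV. (Z i j)^2) \<le> 1" unfolding Z_def by (rule rowsum_le[OF QQ VV])
    ultimately show ?thesis by simp
  qed
  have col: "(\<Sum>i\<in>UNIV. D i j) \<le> 1" for j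
  proof -
    have "(\<Sum>i\<in>UNIV. D i j) = (\<Sum>i\<in>UNIV. (W i j)^2)/2 + (\<Sum>i\<in>UNIV. (Z i j)^2)/2"
      by (simp add: D_def add_divide_distrib sum.distrib sum_divide_distrib)
    moreover have "(\<Sum>i\<in>UNIV. (W i j)^2) \<le> 1"
      using rowsum_le[OF UU PP, of j] by (simp add: W_def mult.commute)
    moreover have "(\<Sum>i\<in>UNIV. (Z i j)^2) \<le> 1"
      using rowsum_le[OF VV QQ, of j] by (simp add: Z_def mult.commute)
    ultimately show ?thesis by simp
  qed
  have "(P ** Diag sg ** transpose Q) \<bullet> (U ** Diag s ** transpose V) = (\<Sum>i\<in>UNIV. \<Sum>j\<in>UNIV. sg i * s j * W i j * Z i j)"
    unfolding inner_svd W_def Z_def ..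
  also have "\<dots> \<le> (\<Sum>i\<in>UNIV. \<Sum>j\<in>UNIV. (F i + G j) * D i j)"
  proof (intro sum_mono)
    fix i j
    have "W i j * Z i j \<le> D i j"
      using sum_squares_ge_zero[of "W i j - Z i j" 0] by (simp add: D_def power2_eq_square algebra_simps)
    hence "sg i * s j * (W i j * Z i j) \<le> sg i * s j * D i j"
      using sg s by (intro mult_left_mono) auto
    also have "\<dots> \<le> (F i + G j) * D i j" using FG[of i j] D0[of i j] by (intro mult_right_mono) auto
    finally show "sg i * s j * W i j * Z i j \<le> (F i + G j) * D i j" by (simp add: mult.assoc)
  qed
  also have "\<dots> = (\<Sum>i\<in>UNIV. F i * (\<Sum>j\<in>UNIV. D i j)) + (\<Sum>j\<in>UNIV. G j * (\<Sum>i\<in>UNIV. D i j))"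
    by (simp add: distrib_right sum.distrib sum_distrib_left) (rule sum.swap)
  also have "\<dots> \<le> (\<Sum>i\<in>UNIV. F i) + (\<Sum>j\<in>UNIV. G j)"
  proof (rule add_mono; rule sum_mono)
    fix i show "F i * (\<Sum>j\<in>UNIV. D i j) \<le> F i" using F row[of i] by (simp add: mult_left_le)
  next
    fix j show "G j * (\<Sum>i\<in>UNIV. D i j) \<le> G j" using G col[of j] by (simp add: mult_left_le)
  qed
  finally show ?thesis .
qed



lemma rho_tangent:
  fixes a g x :: real
  assumes a: "a > 0" and g: "g > 0" and x: "x \<ge> 0"
  shows "rho a x \<le> rho a g + (a*(a+1)/(2*g*(a+g)^2)) * (x^2 - g^2)"
proof -
  define c where "c = a + 1"
  define D where "D = 2*g*(a+g)^2*(a+x)"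
  have Dp: "D > 0" using a g x by (simp add: D_def)
  have e1: "D * rho a g = 2*g*(a+g)*(a+x)*c*g"
    using a g by (simp add: D_def rho_def c_def power2_eq_square field_simps)
  have e2: "D * rho a x = 2*g*(a+g)^2*c*x"
    using a x by (simp add: D_def rho_def c_def power2_eq_square field_simps)
  have kk: "(2*g*(a+g)^2) * (a*(a+1)/(2*g*(a+g)^2)) = a*(a+1)" using a g by simp
  have "D * ((a*(a+1)/(2*g*(a+g)^2)) * (x^2 - g^2)) = ((2*g*(a+g)^2) * (a*(a+1)/(2*g*(a+g)^2))) * ((a+x)*(x^2 - g^2))"
    unfolding D_def by (simp only: mult_ac)
  hence e3: "D * ((a*(a+1)/(2*g*(a+g)^2)) * (x^2 - g^2)) = a*c*(x^2-g^2)*(a+x)"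
    unfolding kk by (simp add: c_def mult_ac)
  have "D * (rho a g + (a*(a+1)/(2*g*(a+g)^2)) * (x^2 - g^2) - rho a x)
      = 2*g*(a+g)*(a+x)*c*g + a*c*(x^2-g^2)*(a+x) - 2*g*(a+g)^2*c*x"
    using e1 e2 e3 by (simp add: algebra_simps)
  also have "\<dots> = a*c*(x-g)^2*(a+x+2*g)"
    by (simp add: power2_eq_square algebra_simps)
  also have "\<dots> \<ge> 0" using a g x by (simp add: c_def)
  finally have "D * (rho a g + (a*(a+1)/(2*g*(a+g)^2)) * (x^2 - g^2) - rho a x) \<ge> 0" .
  hence "rho a g + (a*(a+1)/(2*g*(a+g)^2)) * (x^2 - g^2) - rho a x \<ge> 0"
    using Dp by (simp add: zero_le_mult_iff)
  thus ?thesis by simp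
qed

lemma rho_nonneg: "a > 0 \<Longrightarrow> x \<ge> 0 \<Longrightarrow> rho a x \<ge> 0"
  by (simp add: rho_def)

lemma rho_mix:
  fixes a g :: real and w t :: "'k::finite \<Rightarrow> real"
  assumes a: "a > 0" and g: "g \<ge> 0" and t: "\<forall>k. t k \<ge> 0" and w: "\<forall>k. w k \<ge> 0"
    and sw: "(\<Sum>k\<in>UNIV. w k) = 1" and gt: "g^2 = (\<Sum>k\<in>UNIV. w k * (t k)^2)"
  shows "(\<Sum>k\<in>UNIV. w k * rho a (t k)) \<le> rho a g"
proof (cases "g = 0")
  case True
  hence "(\<Sum>k\<in>UNIV. w k * (t k)^2) = 0" using gt by simp
  hence "\<forall>k\<in>UNIV. w k * (t k)^2 = 0" using w by (subst sum_nonneg_eq_0_iff[symmetric]) auto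
  hence "\<forall>k. w k * rho a (t k) = 0" by (auto simp: rho_def)
  hence "(\<Sum>k\<in>UNIV. w k * rho a (t k)) = 0" by (intro sum.neutral) blast
  thus ?thesis using True by (simp add: rho_def)
next
  case False
  hence gp: "g > 0" using g by simp
  define K where "K = a*(a+1)/(2*g*(a+g)^2)"
  have "(\<Sum>k\<in>UNIV. w k * rho a (t k)) \<le> (\<Sum>k\<in>UNIV. w k * (rho a g + K * ((t k)^2 - g^2)))"
    using rho_tangent[OF a gp] t w unfolding K_def by (intro sum_mono mult_left_mono) auto
  also have "\<dots> = (\<Sum>k\<in>UNIV. w k) * rho a g + K * ((\<Sum>k\<in>UNIV. w k * (t k)^2) - (\<Sum>k\<in>UNIV. w k) * g^2)"
    by (simp add: algebra_simps sum.distrib sum_distrib_left sum_subtractf sum_distrib_right)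
  also have "\<dots> = rho a g" using sw gt by simp
  finally show ?thesis .
qed

lemma Diag_mult: "Diag s ** Diag t = Diag (\<lambda>i. s i * t i)"
proof -
  have "(\<Sum>k\<in>UNIV. (if i = k then s i else 0) * (if k = j then t k else 0)) = (if i = j then s i * t i else 0)" for i j
  proof -
    have "(\<Sum>k\<in>UNIV. (if i = k then s i else 0) * (if k = j then t k else 0))
        = (\<Sum>k\<in>UNIV. if k = i then s i * (if i = j then t i else 0) else 0)"
      by (rule sum.cong) auto
    thus ?thesis by simp
  qed
  thus ?thesis by (simp add: Diag_def matrix_matrix_mult_def vec_eq_iff)
qed

lemma transpose_svd: "transpose (U ** Diag g ** transpose V) = V ** Diag g ** transpose U"
  by (simp add: matrix_transpose_mul matrix_mul_assoc)

lemma YYt: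
  fixes U :: "real^'m^'r" and V :: "real^'m^'c"
  assumes VV: "transpose V ** V = mat 1"
  shows "(U ** Diag g ** transpose V) ** transpose (U ** Diag g ** transpose V) = U ** Diag (\<lambda>i. g i ^ 2) ** transpose U"
proof -
  have "(U ** Diag g ** transpose V) ** transpose (U ** Diag g ** transpose V)
      = U ** Diag g ** (transpose V ** V) ** Diag g ** transpose U"
    by (simp add: transpose_svd matrix_mul_assoc)
  also have "\<dots> = U ** (Diag g ** Diag g) ** transpose U" by (simp add: VV matrix_mul_assoc)
  finally show ?thesis by (simp add: Diag_mult power2_eq_square)
qed

lemma orth_sums:
  fixes A :: "real^'m^'m"
  assumes "orthogonal_matrix A"
  shows "(\<Sum>k\<in>UNIV. (A$j$k)^2) = 1" "(\<Sum>j\<in>UNIV. (A$j$k)^2) = 1"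
proof -
  have "A ** transpose A = mat 1" "transpose A ** A = mat 1" using assms by (auto simp: orthogonal_matrix_def)
  hence "(A ** transpose A) $ j $ j = 1" "(transpose A ** A) $ k $ k = 1" by (auto simp: mat_def)
  thus "(\<Sum>k\<in>UNIV. (A$j$k)^2) = 1" "(\<Sum>j\<in>UNIV. (A$j$k)^2) = 1"
    by (simp_all add: matrix_matrix_mult_def transpose_def power2_eq_square)
qed

lemma T_svd_le:
  fixes U P :: "real^'m^'m" and V Q :: "real^'m^'n"
  assumes a: "a > 0" and oU: "orthogonal_matrix U" and VV: "transpose V ** V = mat 1" and g: "\<forall>j. g j \<ge> 0"
    and oP: "orthogonal_matrix P" and QQ: "transpose Q ** Q = mat 1" and t: "\<forall>k. t k \<ge> 0"
    and eq: "U ** Diag g ** transpose V = P ** Diag t ** transpose Q"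
  shows "(\<Sum>k\<in>UNIV. rho a (t k)) \<le> (\<Sum>j\<in>UNIV. rho a (g j))"
proof -
  define A where "A = transpose U ** P"
  have oA: "orthogonal_matrix A" unfolding A_def using oU oP
    by (simp add: orthogonal_matrix_mul)
  have UU: "transpose U ** U = mat 1" using oU by (simp add: orthogonal_matrix)
  have e1: "U ** Diag (\<lambda>i. g i ^ 2) ** transpose U = P ** Diag (\<lambda>i. t i ^ 2) ** transpose P"
    using YYt[OF VV, of U g] YYt[OF QQ, of P t] eq by simp
  have "transpose U ** (U ** Diag (\<lambda>i. g i ^ 2) ** transpose U) ** U = (transpose U ** U) ** Diag (\<lambda>i. g i ^ 2) ** (transpose U ** U)"
    by (simp add: matrix_mul_assoc)
  hence "Diag (\<lambda>i. g i ^ 2) = transpose U ** (U ** Diag (\<lambda>i. g i ^ 2) ** transpose U) ** U"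
    by (simp add: UU)
  also have "\<dots> = A ** Diag (\<lambda>i. t i ^ 2) ** transpose A"
    unfolding e1 by (simp add: A_def matrix_transpose_mul matrix_mul_assoc)
  finally have e2: "Diag (\<lambda>i. g i ^ 2) = A ** Diag (\<lambda>i. t i ^ 2) ** transpose A" .
  have gj: "(g j)^2 = (\<Sum>k\<in>UNIV. (A$j$k)^2 * (t k)^2)" for j
  proof -
    have "(g j)^2 = Diag (\<lambda>i. g i ^ 2) $ j $ j" by (simp add: Diag_def)
    also have "\<dots> = (\<Sum>k\<in>UNIV. (A$j$k)^2 * (t k)^2)" unfolding e2 entry_svd
      by (simp add: transpose_def power2_eq_square mult_ac)
    finally show ?thesis .
  qed
  have "(\<Sum>k\<in>UNIV. rho a (t k)) = (\<Sum>k\<in>UNIV. (\<Sum>j\<in>UNIV. (A$j$k)^2) * rho a (t k))"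
    using orth_sums(2)[OF oA] by simp
  also have "\<dots> = (\<Sum>j\<in>UNIV. \<Sum>k\<in>UNIV. (A$j$k)^2 * rho a (t k))"
    by (simp add: sum_distrib_right) (rule sum.swap)
  also have "\<dots> \<le> (\<Sum>j\<in>UNIV. rho a (g j))"
  proof (rule sum_mono)
    fix j
    show "(\<Sum>k\<in>UNIV. (A$j$k)^2 * rho a (t k)) \<le> rho a (g j)"
      by (rule rho_mix[OF a _ t]) (use g orth_sums(1)[OF oA] gj in auto)
  qed
  finally show ?thesis .
qed



lemma norm_svd:
  fixes U :: "real^'m^'r" and V :: "real^'m^'c"
  assumes UU: "transpose U ** U = mat 1" and VV: "transpose V ** V = mat 1"
  shows "(norm (U ** Diag s ** transpose V))^2 = (\<Sum>i\<in>UNIV. (s i)^2)"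
proof -
  have u: "(\<Sum>a\<in>UNIV. U$a$i * U$a$j) = (if i = j then 1 else 0)" for i j
  proof -
    have "(\<Sum>a\<in>UNIV. U$a$i * U$a$j) = (transpose U ** U) $ i $ j"
      by (simp add: matrix_matrix_mult_def transpose_def)
    thus ?thesis using UU by (simp add: mat_def)
  qed
  have v: "(\<Sum>a\<in>UNIV. V$a$i * V$a$j) = (if i = j then 1 else 0)" for i j
  proof -
    have "(\<Sum>a\<in>UNIV. V$a$i * V$a$j) = (transpose V ** V) $ i $ j"
      by (simp add: matrix_matrix_mult_def transpose_def)
    thus ?thesis using VV by (simp add: mat_def)
  qed
  have "(norm (U ** Diag s ** transpose V))^2 = (U ** Diag s ** transpose V) \<bullet> (U ** Diag s ** transpose V)"
    by (rule power2_norm_eq_inner)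
  also have "\<dots> = (\<Sum>i\<in>UNIV. \<Sum>j\<in>UNIV. s i * s j * (if i = j then 1 else 0) * (if i = j then 1 else 0))"
    unfolding inner_svd u v ..
  also have "\<dots> = (\<Sum>i\<in>UNIV. (s i)^2)"
    by (simp add: power2_eq_square if_distrib cong: if_cong)
  finally show ?thesis .
qed

lemma diff_svd:
  fixes U :: "real^'m^'r" and V :: "real^'m^'c"
  shows "U ** Diag g ** transpose V - U ** Diag s ** transpose V = U ** Diag (\<lambda>i. g i - s i) ** transpose V"
  by (simp add: vec_eq_iff entry_svd sum_subtractf[symmetric] algebra_simps)

lemma Tfun_sum: "Tfun a X = (\<Sum>i\<in>UNIV. rho a (sing_vals X i))"
  unfolding Tfun_def by (rule sum.mono_neutral_left) (auto simp: rho_def)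

lemma sing_vals_svd:
  fixes X :: "real^'n^'m"
  assumes "CARD('m) \<le> CARD('n)"
  shows "\<exists>U V. is_svd X U (sing_vals X) V"
proof -
  have "\<exists>s U V. is_svd X U s V" using svd_exists[OF assms, of X] by blast
  hence "\<exists>U V. is_svd X U (SOME s. \<exists>U V. is_svd X U s V) V" by (rule someI_ex)
  thus ?thesis by (simp add: sing_vals_def)
qed

lemma linear_vecm: "linear (vecm :: real^'n^'m \<Rightarrow> real^('m\<times>'n))"
  by (rule linearI) (simp_all add: vecm_def vec_eq_iff)

lemma linear_Aop: "linear (Aop A)"
proof -
  have "Aop A = (\<lambda>x. A *v x) \<circ> vecm" by (simp add: Aop_def fun_eq_iff)
  thus ?thesis using linear_compose[OF linear_vecm matrix_vector_mul_linear] by simp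
qed

lemma norm_vecm: "norm (vecm (X :: real^'n^'m)) = norm X"
proof -
  have "vecm X \<bullet> vecm X = X \<bullet> X"
    unfolding inner_vec_def vecm_def
    by (simp add: UNIV_Times_UNIV[symmetric] sum.cartesian_product' del: UNIV_Times_UNIV)
  thus ?thesis by (simp add: norm_eq_sqrt_inner)
qed

lemma norm_Aop: "norm (Aop A X) \<le> spec_norm A * norm X"
proof -
  have "norm (Aop A X) \<le> onorm ((*v) A) * norm (vecm X)"
    unfolding Aop_def by (rule onorm[OF matrix_vector_mul_bounded_linear])
  thus ?thesis by (simp add: spec_norm_def norm_vecm)
qed



lemma key_ineq:
  fixes Xs Y B :: "real^'n^'m" and a l :: real
  assumes mn: "CARD('m) \<le> CARD('n)" and a: "a > 0" and l: "l > 0"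
    and sB: "is_svd B U s V"
    and Yd: "Y = U ** Diag (\<lambda>i. g_fun l a (s i)) ** transpose V"
  shows "1/2 * (norm (Y - B))^2 + l * Tfun a Y \<le> 1/2 * (norm (Xs - B))^2 + l * Tfun a Xs"
proof -
  define gs where "gs i = g_fun l a (s i)" for i
  have oU: "orthogonal_matrix U" and VV: "transpose V ** V = mat 1" and s0: "\<forall>i. 0 \<le> s i"
    and Bd: "B = U ** Diag s ** transpose V" using sB by (auto simp: is_svd_def)
  have UU: "transpose U ** U = mat 1" using oU by (simp add: orthogonal_matrix)
  have gs0: "\<forall>i. gs i \<ge> 0" using scalar_g[OF a l _ order_refl] s0 by (simp add: gs_def)
  have scal: "(gs j - s j)^2/2 + l * rho a (gs j) \<le> (x - s j)^2/2 + l * rho a x" if "x \<ge> 0" for j x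
    using scalar_g[OF a l _ that, of "s j"] s0 by (simp add: gs_def)
  obtain P' Q' where sY: "is_svd Y P' (sing_vals Y) Q'" using sing_vals_svd[OF mn] by blast
  have TY: "Tfun a Y \<le> (\<Sum>j\<in>UNIV. rho a (gs j))"
    unfolding Tfun_sum
    by (rule T_svd_le[OF a oU VV gs0]) (use sY Yd in \<open>auto simp: is_svd_def gs_def\<close>)
  have nYB: "(norm (Y - B))^2 = (\<Sum>j\<in>UNIV. (gs j - s j)^2)"
    unfolding Yd Bd diff_svd gs_def by (rule norm_svd[OF UU VV])
  have SY: "1/2 * (norm (Y - B))^2 + l * Tfun a Y \<le> (\<Sum>j\<in>UNIV. (gs j - s j)^2/2 + l * rho a (gs j))"
  proof -
    have "l * Tfun a Y \<le> l * (\<Sum>j\<in>UNIV. rho a (gs j))" using TY l by simp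
    thus ?thesis unfolding nYB by (simp add: sum.distrib sum_divide_distrib sum_distrib_left)
  qed
  obtain P Q where sX: "is_svd Xs P (sing_vals Xs) Q" using sing_vals_svd[OF mn] by blast
  define sg where "sg = sing_vals Xs"
  have oP: "orthogonal_matrix P" and QQ: "transpose Q ** Q = mat 1" and sg0: "\<forall>i. 0 \<le> sg i"
    and Xd: "Xs = P ** Diag sg ** transpose Q" using sX by (auto simp: is_svd_def sg_def)
  have PP: "transpose P ** P = mat 1" using oP by (simp add: orthogonal_matrix)
  define F where "F i = (sg i)^2/2 + l * rho a (sg i)" for i
  define G where "G j = s j * gs j - (gs j)^2/2 - l * rho a (gs j)" for j
  have F0: "\<forall>i. F i \<ge> 0" using sg0 rho_nonneg[OF a] l by (simp add: F_def)
  have G0: "\<forall>j. G j \<ge> 0"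
  proof
    fix j
    have r0: "rho a 0 = 0" by (simp add: rho_def)
    have "(gs j - s j)^2/2 + l*rho a (gs j) \<le> (s j)^2/2" using scal[of 0 j] r0 by simp
    moreover have "G j = (s j)^2/2 - ((gs j - s j)^2/2 + l*rho a (gs j))"
      by (simp add: G_def power2_eq_square field_simps)
    ultimately show "G j \<ge> 0" by simp
  qed
  have FG: "sg i * s j \<le> F i + G j" for i j
  proof -
    have "(gs j - s j)^2/2 + l * rho a (gs j) \<le> (sg i - s j)^2/2 + l * rho a (sg i)" using scal[of "sg i" j] sg0 by simp
    moreover have "F i + G j - sg i * s j = (sg i - s j)^2/2 + l * rho a (sg i) - ((gs j - s j)^2/2 + l * rho a (gs j))"
      by (simp add: F_def G_def power2_eq_square field_simps)
    ultimately show ?thesis by linarith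
  qed
  have inn: "Xs \<bullet> B \<le> (\<Sum>i\<in>UNIV. F i) + (\<Sum>j\<in>UNIV. G j)"
    unfolding Xd Bd by (rule vn_bound[OF PP QQ UU VV sg0 s0 F0 G0 FG])
  have nX: "(norm Xs)^2 = (\<Sum>i\<in>UNIV. (sg i)^2)" unfolding Xd by (rule norm_svd[OF PP QQ])
  have nB: "(norm B)^2 = (\<Sum>i\<in>UNIV. (s i)^2)" unfolding Bd by (rule norm_svd[OF UU VV])
  have nXB: "(norm (Xs - B))^2 = (norm Xs)^2 - 2 * (Xs \<bullet> B) + (norm B)^2"
    by (simp add: power2_norm_eq_inner inner_diff_left inner_diff_right inner_commute)
  have TX: "Tfun a Xs = (\<Sum>i\<in>UNIV. rho a (sg i))" by (simp add: Tfun_sum sg_def)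
  have "(\<Sum>j\<in>UNIV. (gs j - s j)^2/2 + l * rho a (gs j)) = (\<Sum>j\<in>UNIV. (s j)^2/2 - G j)"
    by (rule sum.cong) (auto simp: G_def power2_eq_square field_simps)
  also have "\<dots> = (\<Sum>j\<in>UNIV. (s j)^2)/2 - (\<Sum>j\<in>UNIV. G j)"
    by (simp add: sum_subtractf sum_divide_distrib)
  also have "\<dots> \<le> 1/2 * (norm (Xs - B))^2 + l * Tfun a Xs"
  proof -
    have "(\<Sum>i\<in>UNIV. F i) = (\<Sum>i\<in>UNIV. (sg i)^2)/2 + l * (\<Sum>i\<in>UNIV. rho a (sg i))"
      by (simp add: F_def sum.distrib sum_divide_distrib sum_distrib_left)
    moreover have "1/2 * ((\<Sum>i\<in>UNIV. (sg i)^2) - 2 * (Xs \<bullet> B) + (\<Sum>i\<in>UNIV. (s i)^2))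
        = (\<Sum>i\<in>UNIV. (sg i)^2)/2 - Xs \<bullet> B + (\<Sum>i\<in>UNIV. (s i)^2)/2" by (simp add: algebra_simps)
    ultimately show ?thesis using inn unfolding nXB nX nB TX by linarith
  qed
  finally show ?thesis using SY by linarith
qed

lemma fixed_point:
  fixes A :: "real^('m::finite \<times> 'n::finite)^'p::finite" and b :: "real^'p" and Xs :: "real^'n^'m"
    and a lam mu :: real
  assumes mn: "CARD('m) \<le> CARD('n)"
    and a: "a > 0" and lam: "lam > 0"
    and mu: "mu > 0" and muA: "mu * (spec_norm A)\<^sup>2 < 1"
    and opt: "\<forall>X :: real^'n^'m. 1/2 * (norm (Aop A Xs - b))\<^sup>2 + lam * Tfun a Xs
                          \<le> 1/2 * (norm (Aop A X - b))\<^sup>2 + lam * Tfun a X"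
    and sB: "is_svd (Bmu A b mu Xs) U s V"
  shows "Xs = U ** Diag (\<lambda>i. g_fun (lam * mu) a (s i)) ** transpose V"
proof -
  define B where "B = Bmu A b mu Xs"
  define Y where "Y = U ** Diag (\<lambda>i. g_fun (lam * mu) a (s i)) ** transpose V"
  have lm: "lam * mu > 0" using lam mu by simp
  have S: "1/2 * (norm (Y - B))^2 + (lam*mu) * Tfun a Y \<le> 1/2 * (norm (Xs - B))^2 + (lam*mu) * Tfun a Xs"
    by (rule key_ineq[OF mn a lm]) (use sB in \<open>simp_all add: B_def Y_def\<close>)
  have F: "1/2 * (norm (Aop A Xs - b))^2 + lam * Tfun a Xs \<le> 1/2 * (norm (Aop A Y - b))^2 + lam * Tfun a Y"
    using opt by blast
  define D where "D = Y - Xs"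
  define R where "R = b - Aop A Xs"
  define r where "r = adjoint (Aop A) R"
  have lin: "linear (Aop A)" by (rule linear_Aop)
  have Bd: "B = Xs + mu *\<^sub>R r" by (simp add: B_def Bmu_def r_def R_def)
  have AY: "Aop A Y - b = Aop A D - R"
    using linear_diff[OF lin, of Y Xs] by (simp add: D_def R_def algebra_simps)
  have e: "D \<bullet> r = Aop A D \<bullet> R" unfolding r_def by (rule adjoint_works[OF lin])
  have nYB: "(norm (Y - B))^2 = (norm D)^2 - 2*mu*(Aop A D \<bullet> R) + mu^2 * (norm r)^2"
  proof -
    have "Y - B = D - mu *\<^sub>R r" by (simp add: Bd D_def)
    hence "(norm (Y - B))^2 = (D - mu *\<^sub>R r) \<bullet> (D - mu *\<^sub>R r)" by (simp add: power2_norm_eq_inner)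
    also have "\<dots> = D \<bullet> D - 2*mu*(D \<bullet> r) + mu^2 * (r \<bullet> r)"
      by (simp add: inner_diff_left inner_diff_right inner_commute power2_eq_square algebra_simps)
    finally show ?thesis using e by (simp add: power2_norm_eq_inner)
  qed
  have nXB: "(norm (Xs - B))^2 = mu^2 * (norm r)^2" by (simp add: Bd power_mult_distrib)
  have nAY: "(norm (Aop A Y - b))^2 = (norm (Aop A D))^2 - 2*(Aop A D \<bullet> R) + (norm R)^2"
    unfolding AY by (simp add: power2_norm_eq_inner inner_diff_left inner_diff_right inner_commute)
  have nAX: "(norm (Aop A Xs - b))^2 = (norm R)^2" by (simp add: R_def norm_minus_commute)
  have S': "1/2 * (norm D)^2 - mu*(Aop A D \<bullet> R) + (lam*mu) * Tfun a Y \<le> (lam*mu) * Tfun a Xs"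
    using S unfolding nYB nXB by (simp add: algebra_simps)
  have F': "lam * Tfun a Xs \<le> 1/2 * (norm (Aop A D))^2 - (Aop A D \<bullet> R) + lam * Tfun a Y"
    using F unfolding nAY nAX by (simp add: algebra_simps)
  hence "mu * (lam * Tfun a Xs) \<le> mu * (1/2 * (norm (Aop A D))^2 - (Aop A D \<bullet> R) + lam * Tfun a Y)"
    using mu by (intro mult_left_mono) auto
  hence "1/2 * (norm D)^2 \<le> mu/2 * (norm (Aop A D))^2" using S' by (simp add: algebra_simps)
  also have "mu/2 * (norm (Aop A D))^2 \<le> mu/2 * (spec_norm A * norm D)^2"
    using norm_Aop[of A D] mu by (intro mult_left_mono power_mono) auto
  finally have "(norm D)^2 \<le> (mu * (spec_norm A)^2) * (norm D)^2" by (simp add: power_mult_distrib)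
  hence "(1 - mu * (spec_norm A)^2) * (norm D)^2 \<le> 0" by (simp add: algebra_simps)
  hence "(norm D)^2 \<le> 0" using muA by (simp add: mult_le_0_iff)
  hence "D = 0" by simp
  thus ?thesis by (simp add: D_def Y_def)
qed


theorem mainTheorem4:
  fixes A :: "real^('m::finite \<times> 'n::finite)^'p::finite" and b :: "real^'p" and Xs :: "real^'n^'m"
    and a lam mu :: real
  assumes "CARD('m) \<le> CARD('n)"
    and "a > 0" and "lam > 0"
    and "mu > 0" and "mu * (spec_norm A)\<^sup>2 < 1"
    and "\<forall>X :: real^'n^'m. 1/2 * (norm (Aop A Xs - b))\<^sup>2 + lam * Tfun a Xs
                          \<le> 1/2 * (norm (Aop A X - b))\<^sup>2 + lam * Tfun a X"
  shows "Xs = G_op (lam * mu) a (Bmu A b mu Xs) \<and>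
         (\<forall>U s V. is_svd (Bmu A b mu Xs) U s V \<longrightarrow>
                  Xs = U ** Diag (\<lambda>i. g_fun (lam * mu) a (s i)) ** transpose V)"
proof -
  have all: "\<forall>U s V. is_svd (Bmu A b mu Xs) U s V \<longrightarrow>
                  Xs = U ** Diag (\<lambda>i. g_fun (lam * mu) a (s i)) ** transpose V"
    using fixed_point[OF assms] by blast
  define B where "B = Bmu A b mu Xs"
  have ex: "\<exists>t. case t of (U, s, V) \<Rightarrow> is_svd B U s V" using svd_exists[OF assms(1), of B] by auto
  obtain U s V where t: "(SOME (U, s, V). is_svd B U s V) = (U, s, V)" by (metis prod_cases3)
  have sv: "is_svd B U s V" using someI_ex[OF ex] t by simp
  have "G_op (lam * mu) a B = U ** Diag (\<lambda>i. g_fun (lam * mu) a (s i)) ** transpose V"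
    by (simp add: G_op_def t)
  hence "Xs = G_op (lam * mu) a B" using all sv by (simp add: B_def)
  thus ?thesis using all by (simp add: B_def)
qed

end
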